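(* For every $n\in\mathbb{N}$, \[ \sum_{k=1}^{n+1}\frac{2^k}{k}=\frac{n+2}{2}\,{}_3F_2\!\left(1,1,n+3;\,2,2;\,\tfrac12\right)+H_{n+1}-\log 2. \]
   Context: Pochhammer symbol: $(\alpha)_0=1$, $(\alpha)_k=\alpha(\alpha+1)\cdots(\alpha+k-1)$. ${}_3F_2(a,b,c;d,e;z)=\sum_{k\ge0}\frac{(a)_k(b)_k(c)_k}{(d)_k(e)_k}\frac{z^k}{k!}$. $H_n=\sum_{k=1}^{n}\frac1k$. *)

theory Defs
  imports "HOL-Analysis.Analysis"
begin

definition hyp3F2 :: "real \<Rightarrow> real \<Rightarrow> real \<Rightarrow> real \<Rightarrow> real \<Rightarrow> real \<Rightarrow> real" where
  "hyp3F2 a b c d e z =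
     (\<Sum>k. pochhammer a k * pochhammer b k * pochhammer c k
            / (pochhammer d k * pochhammer e k) * z ^ k / fact k)"

definition harm :: "nat \<Rightarrow> real" where
  "harm n = (\<Sum>k=1..n. 1 / real k)"

end

theory Submission
  imports Defs
begin

lemma L1: "(\<lambda>j. pochhammer (real N) j / fact j * (1/2::real)^j) sums 2^N"
proof -
  have S: "(\<lambda>j. ((- real N) gchoose j) * (-1/2)^j) sums (1 + (-1/2::real)) powr (- real N)"
    by (rule gen_binomial_real) simp
  have V: "(1 + (-1/2::real)) powr (- real N) = 2^N"
  proof -
    have "(1 + (-1/2::real)) = inverse 2" by simp
    hence "(1 + (-1/2::real)) powr (- real N) = 2 powr real N"
      by (simp add: powr_minus powr_realpow power_one_over)
    thus ?thesis by (simp add: powr_realpow)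
  qed
  have T: "((- real N) gchoose j) * (-1/2)^j = pochhammer (real N) j / fact j * (1/2::real)^j" for j
  proof -
    have "((- real N) gchoose j) * (-1/2)^j = ((-1)^j * (-1/2)^j) * pochhammer (real N) j / fact j"
      by (simp add: gbinomial_pochhammer)
    also have "(-1::real)^j * (-1/2)^j = (1/2)^j"
    proof -
      have "(-1::real)^j * (-1/2)^j = ((-1) * (-1/2))^j" by (rule power_mult_distrib[symmetric])
      also have "\<dots> = (1/2)^j" by simp
      finally show ?thesis .
    qed
    finally show ?thesis by (simp only: mult.commute times_divide_eq_right)
  qed
  have "(\<lambda>j. ((- real N) gchoose j) * (-1/2)^j) = (\<lambda>j. pochhammer (real N) j / fact j * (1/2::real)^j)"
    by (rule ext) (rule T)
  with S V show ?thesis by simp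
qed

lemma L1': "(\<lambda>k. pochhammer (real N) (Suc k) / fact (Suc k) * (1/2::real)^(Suc k)) sums (2^N - 1)"
proof -
  have "(\<lambda>k. pochhammer (real N) (Suc k) / fact (Suc k) * (1/2::real)^(Suc k)) sums
          (2^N - pochhammer (real N) 0 / fact 0 * (1/2::real)^0)"
    using sums_Suc_iff[of "\<lambda>j. pochhammer (real N) j / fact j * (1/2::real)^j"] L1[of N]
    by simp
  then show ?thesis by simp
qed

lemma Lln: "(\<lambda>k. (1/2::real)^(Suc k) / real (Suc k)) sums ln 2"
proof -
  have A: "(\<lambda>n. - ((-(-1/2))^n) / of_nat n) sums ln (1 + (-1/2::real))"
    by (rule ln_series') simp
  have "(\<lambda>n. - (- ((-(-1/2::real))^n) / of_nat n)) sums (- ln (1 + (-1/2::real)))"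
    by (rule sums_minus[OF A])
  moreover have "(\<lambda>n. - (- ((-(-1/2::real))^n) / of_nat n)) = (\<lambda>n. (1/2::real)^n / of_nat n)"
    by (rule ext) simp
  moreover have "- ln (1 + (-1/2::real)) = ln 2"
    by (simp add: ln_div)
  ultimately have B: "(\<lambda>n. (1/2::real)^n / of_nat n) sums ln 2"
    by simp
  have "(\<lambda>k. (1/2::real)^(Suc k) / real (Suc k)) sums (ln 2 - (1/2::real)^0 / real 0)"
    using sums_Suc_iff[of "\<lambda>n. (1/2::real)^n / of_nat n"] B by simp
  thus ?thesis by simp
qed

lemma alg: "(N::real) > 0 \<Longrightarrow> F > 0 \<Longrightarrow> K > 0 \<Longrightarrow>
  (N+K)*p/N / F / K * h = p/F/K*h + p/F*h/N"
  by (simp add: field_simps)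

lemma alg2: "(F::real) > 0 \<Longrightarrow> K > 0 \<Longrightarrow> c > 0 \<Longrightarrow>
   F*F*Q/((K*F)*(K*F)) * x / F = (2/c) * ((c*Q)/(K*F)/K * ((1/2)*x))"
  by (simp add: field_simps)

lemma L2: "(\<lambda>k. pochhammer (real (Suc m)) (Suc k) / fact (Suc k) / real (Suc k) * (1/2::real)^(Suc k))
   sums ((\<Sum>k=1..m. 2^k / real k) - harm m + ln 2)"
proof (induction m)
  case 0
  have "pochhammer (1::real) (Suc k) / fact (Suc k) / real (Suc k) * (1/2::real)^(Suc k)
        = (1/2::real)^(Suc k) / real (Suc k)" for k
    by (simp add: pochhammer_fact[symmetric])
  then show ?case using Lln by (simp add: harm_def)
next
  case (Suc m)
  define N where "N = real (Suc m)"
  have Npos: "N > 0" by (simp add: N_def)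
  have eq: "pochhammer (real (Suc (Suc m))) (Suc k) / fact (Suc k) / real (Suc k) * (1/2::real)^(Suc k)
     = pochhammer (real (Suc m)) (Suc k) / fact (Suc k) / real (Suc k) * (1/2::real)^(Suc k)
       + (pochhammer (real (Suc m)) (Suc k) / fact (Suc k) * (1/2::real)^(Suc k)) / N" for k
  proof -
    have r1: "pochhammer N (Suc (Suc k)) = N * pochhammer (N+1) (Suc k)"
      by (rule pochhammer_rec)
    have r2: "pochhammer N (Suc (Suc k)) = (N + real (Suc k)) * pochhammer N (Suc k)"
      by (simp add: pochhammer_rec')
    have "N * pochhammer (N+1) (Suc k) = (N + real (Suc k)) * pochhammer N (Suc k)"
      using r1 r2 by simp
    hence P: "pochhammer (N+1) (Suc k) = (N + real (Suc k)) * pochhammer N (Suc k) / N"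
      using Npos by (simp add: field_simps)
    have e1: "real (Suc (Suc m)) = N + 1" by (simp add: N_def)
    have P2: "pochhammer (real (Suc (Suc m))) (Suc k) = (N + real (Suc k)) * pochhammer N (Suc k) / N"
      unfolding e1 by (rule P)
    have fp: "(fact (Suc k)::real) > 0" by simp
    have kp: "real (Suc k) > 0" by simp
    show ?thesis unfolding P2 N_def[symmetric] using Npos fp kp
      by (rule alg)
  qed
  have "(\<lambda>k. pochhammer (real (Suc m)) (Suc k) / fact (Suc k) / real (Suc k) * (1/2::real)^(Suc k)
       + (pochhammer (real (Suc m)) (Suc k) / fact (Suc k) * (1/2::real)^(Suc k)) / N)
     sums (((\<Sum>k=1..m. 2^k / real k) - harm m + ln 2) + (2^(Suc m) - 1) / N)"
    by (intro sums_add Suc.IH sums_divide L1')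
  moreover have "((\<Sum>k=1..m. 2^k / real k) - harm m + ln 2) + (2^(Suc m) - 1) / N
     = (\<Sum>k=1..Suc m. 2^k / real k) - harm (Suc m) + ln 2"
    by (simp add: harm_def N_def diff_divide_distrib)
  ultimately show ?case by (simp only: eq)
qed

theorem mainTheorem15:
  fixes n :: nat
  shows "(\<Sum>k=1..n+1. 2 ^ k / real k) =
         (real n + 2) / 2 * hyp3F2 1 1 (real n + 3) 2 2 (1/2) + harm (n+1) - ln 2"
proof -
  define S where "S = (\<Sum>k=1..n+1. 2 ^ k / real k) - harm (n+1) + ln 2"
  have A: "(\<lambda>k. pochhammer (real (Suc (Suc n))) (Suc k) / fact (Suc k) / real (Suc k) * (1/2::real)^(Suc k))
     sums S" using L2[of "Suc n"] by (simp add: S_def)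
  have p2: "pochhammer (2::real) k = fact (Suc k)" for k
    using pochhammer_rec[of "1::real" k] by (simp add: pochhammer_fact[symmetric])
  have trm: "pochhammer 1 k * pochhammer 1 k * pochhammer (real n + 3) k
            / (pochhammer 2 k * pochhammer 2 k) * (1/2::real) ^ k / fact k
       = (2 / (real n + 2)) * (pochhammer (real (Suc (Suc n))) (Suc k) / fact (Suc k) / real (Suc k) * (1/2::real)^(Suc k))" for k
  proof -
    have P: "pochhammer (real (Suc (Suc n))) (Suc k) = (real n + 2) * pochhammer (real n + 3) k"
      by (simp add: pochhammer_rec add.commute add.left_commute)
    have fS: "fact (Suc k) = (real (Suc k)) * (fact k :: real)" by simp
    show ?thesis
      apply (simp only: p2 pochhammer_fact[symmetric] P fS power_Suc)
      apply (rule alg2)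
      apply simp_all
      done
  qed
  have "(\<lambda>k. pochhammer 1 k * pochhammer 1 k * pochhammer (real n + 3) k
            / (pochhammer 2 k * pochhammer 2 k) * (1/2::real) ^ k / fact k) sums ((2 / (real n + 2)) * S)"
    unfolding trm by (rule sums_mult[OF A])
  hence "hyp3F2 1 1 (real n + 3) 2 2 (1/2) = (2 / (real n + 2)) * S"
    unfolding hyp3F2_def by (rule sums_unique[symmetric])
  hence "(real n + 2) / 2 * hyp3F2 1 1 (real n + 3) 2 2 (1/2) = S"
    by simp
  thus ?thesis unfolding S_def by linarith
qed

end
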